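(* In the online tolling setting described in the context, let the tolls be generated by $\boldsymbol{\tau}^{(1)}=\bm{0}$ and $\boldsymbol{\tau}^{(t+1)}=(\boldsymbol{\tau}^{(t)}-\gamma(\bm{c}-\bm{x}^t))_+$ (componentwise positive part), where $\bm{x}^t$ are the equilibrium edge flows under $\boldsymbol{\tau}^{(t)}$, with a step size $0<\gamma\le1$. Then for every edge $e\in E$ and every period $t$, $$\tau^{(t)}_e\le\max_{u\in\mathcal{U}}\lambda_u+\max_{e'\in E}c_{e'}+|\mathcal{U}|.$$
   Context: Network: directed graph $G=(V,E)$, edge capacities $c_e\ge0$, fixed edge travel times $l_e\ge0$. Finite user set $\mathcal{U}$; user $u$ has fixed outside-option cost $\lambda_u\ge0$. In each period $t$, O-D pairs $w^t_u$ and values of time $v^t_u\ge0$ are drawn i.i.d. across periods from a distribution $\mathcal{D}$; $\mathcal{P}^t_u$ is the finite set of paths for $w^t_u$. Given tolls $\boldsymbol{\tau}^{(t)}$, the period-$t$ equilibrium assigns each user to a path $P\in\mathcal{P}^t_u$ or the outside option so as to minimize cost ($v^t_u\sum_{e\in P}l_e+\sum_{e\in P}\tau^{(t)}_e$ for a path, $\lambda_u$ for the outside option; capacities need not be respected), with edge flows $x^t_e$ equal to the number of users whose chosen path contains $e$. *)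

theory Defs
  imports Main Complex_Main
begin

definition is_path :: "'e set \<Rightarrow> ('e \<Rightarrow> 'v) \<Rightarrow> ('e \<Rightarrow> 'v) \<Rightarrow> 'v \<Rightarrow> 'v \<Rightarrow> 'e list \<Rightarrow> bool" where
  "is_path E src dst orig dest p \<longleftrightarrow>
     p \<noteq> [] \<and> set p \<subseteq> E \<and> distinct p \<and>
     src (p ! 0) = orig \<and> dst (last p) = dest \<and>
     (\<forall>i. Suc i < length p \<longrightarrow> dst (p ! i) = src (p ! Suc i))"

(* Cost of an option for a user: a path (Some p) or the outside option (None). *)
definition option_cost :: "('e \<Rightarrow> real) \<Rightarrow> ('e \<Rightarrow> real) \<Rightarrow> real \<Rightarrow> real \<Rightarrow> 'e list option \<Rightarrow> real" where
  "option_cost l tau v lam ch =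
     (case ch of None \<Rightarrow> lam
       | Some p \<Rightarrow> v * (\<Sum>e\<in>set p. l e) + (\<Sum>e\<in>set p. tau e))"

definition edge_flow :: "'u set \<Rightarrow> ('u \<Rightarrow> 'e list option) \<Rightarrow> 'e \<Rightarrow> nat" where
  "edge_flow U ch e = card {u\<in>U. \<exists>p. ch u = Some p \<and> e \<in> set p}"

(* Equilibrium under tolls tau: each user picks a cost-minimizing option among
   its available paths Ps u and the outside option (capacities ignored). *)
definition is_equilibrium ::
  "'u set \<Rightarrow> ('u \<Rightarrow> 'e list set) \<Rightarrow> ('e \<Rightarrow> real) \<Rightarrow> ('u \<Rightarrow> real) \<Rightarrow> ('u \<Rightarrow> real)
    \<Rightarrow> ('e \<Rightarrow> real) \<Rightarrow> ('u \<Rightarrow> 'e list option) \<Rightarrow> bool" where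
  "is_equilibrium U Ps l v lam tau ch \<longleftrightarrow>
     (\<forall>u\<in>U. (ch u = None \<or> (\<exists>p\<in>Ps u. ch u = Some p)) \<and>
        option_cost l tau (v u) (lam u) (ch u) \<le> lam u \<and>
        (\<forall>p\<in>Ps u. option_cost l tau (v u) (lam u) (ch u) \<le> option_cost l tau (v u) (lam u) (Some p)))"

end

theory Submission
  imports Defs
begin

theorem lemma4:
  fixes E :: "'e set" and U :: "'u set"
    and src dst :: "'e \<Rightarrow> 'v"
    and c l :: "'e \<Rightarrow> real" and lam :: "'u \<Rightarrow> real"
    and w :: "nat \<Rightarrow> 'u \<Rightarrow> 'v \<times> 'v" and v :: "nat \<Rightarrow> 'u \<Rightarrow> real"
    and Ps :: "nat \<Rightarrow> 'u \<Rightarrow> 'e list set"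
    and ch :: "nat \<Rightarrow> 'u \<Rightarrow> 'e list option"
    and tau :: "nat \<Rightarrow> 'e \<Rightarrow> real" and gamma :: real
  assumes finE: "finite E" and nonemptyE: "E \<noteq> {}"
    and finU: "finite U" and nonemptyU: "U \<noteq> {}"
    and cap: "\<And>e. e \<in> E \<Longrightarrow> c e \<ge> 0"
    and len: "\<And>e. e \<in> E \<Longrightarrow> l e \<ge> 0"
    and lam_nn: "\<And>u. u \<in> U \<Longrightarrow> lam u \<ge> 0"
    and vot: "\<And>t u. t \<ge> 1 \<Longrightarrow> u \<in> U \<Longrightarrow> v t u \<ge> 0"
    and paths_fin: "\<And>t u. t \<ge> 1 \<Longrightarrow> u \<in> U \<Longrightarrow> finite (Ps t u)"
    and paths_ok: "\<And>t u p. t \<ge> 1 \<Longrightarrow> u \<in> U \<Longrightarrow> p \<in> Ps t u \<Longrightarrow>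
                      is_path E src dst (fst (w t u)) (snd (w t u)) p"
    and equil: "\<And>t. t \<ge> 1 \<Longrightarrow> is_equilibrium U (Ps t) l (v t) lam (tau t) (ch t)"
    and tau1: "\<And>e. tau 1 e = 0"
    and tau_step: "\<And>t e. t \<ge> 1 \<Longrightarrow>
                      tau (t + 1) e = max 0 (tau t e - gamma * (c e - real (edge_flow U (ch t) e)))"
    and gamma_pos: "0 < gamma" and gamma_le: "gamma \<le> 1"
  shows "\<forall>t\<ge>1. \<forall>e\<in>E. tau t e \<le> Max (lam ` U) + Max (c ` E) + real (card U)"
proof -
  let ?M = "Max (lam ` U) + Max (c ` E) + real (card U)"
  have nn: "tau t e \<ge> 0" if "t \<ge> 1" for t e
  proof (cases t)
    case 0 then show ?thesis using that by simp
  next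
    case (Suc n) then show ?thesis
      by (cases n) (simp_all add: tau1[simplified] tau_step[of "Suc _", simplified])
  qed
  have lamM: "lam u \<le> Max (lam ` U)" if "u \<in> U" for u using finU that by simp
  have lam0: "0 \<le> Max (lam ` U)" using nonemptyU lamM lam_nn by (meson all_not_in_conv order_trans)
  have cM: "c e \<le> Max (c ` E)" if "e \<in> E" for e using finE that by simp
  have c0: "0 \<le> Max (c ` E)" using nonemptyE cM cap by (meson all_not_in_conv order_trans)
  have flowU: "real (edge_flow U (ch t) e) \<le> real (card U)" for t e
    unfolding edge_flow_def using finU by (simp add: card_mono)
  have noflow: "edge_flow U (ch t) e = 0" if t1: "t \<ge> 1" and eE: "e \<in> E" and big: "tau t e > Max (lam ` U)" for t e
  proof -
    have "{u\<in>U. \<exists>p. ch t u = Some p \<and> e \<in> set p} = {}"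
    proof (rule ccontr)
      assume "{u\<in>U. \<exists>p. ch t u = Some p \<and> e \<in> set p} \<noteq> {}"
      then obtain u p where uU: "u \<in> U" and chp: "ch t u = Some p" and ep: "e \<in> set p" by blast
      have eq: "option_cost l (tau t) (v t u) (lam u) (ch t u) \<le> lam u"
        and alt: "ch t u = None \<or> (\<exists>p\<in>Ps t u. ch t u = Some p)"
        using equil[OF t1] uU unfolding is_equilibrium_def by blast+
      from alt chp have pP: "p \<in> Ps t u" by auto
      have "set p \<subseteq> E" using paths_ok[OF t1 uU pP] unfolding is_path_def by blast
      then have l0: "(\<Sum>e\<in>set p. l e) \<ge> 0" using len by (meson subsetD sum_nonneg)
      have s1: "v t u * (\<Sum>e\<in>set p. l e) \<ge> 0" using vot[OF t1 uU] l0 by simp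
      have s2: "(\<Sum>e\<in>set p. tau t e) \<ge> tau t e"
        by (rule member_le_sum) (use ep nn t1 in auto)
      have "option_cost l (tau t) (v t u) (lam u) (ch t u) \<ge> tau t e"
        using chp s1 s2 unfolding option_cost_def by simp
      then show False using eq big lamM[OF uU] by linarith
    qed
    then show ?thesis unfolding edge_flow_def by (simp only: card.empty)
  qed
  have main: "\<forall>e\<in>E. tau (Suc n) e \<le> ?M" for n
  proof (induction n)
    case 0 then show ?case using tau1[simplified] lam0 c0 by simp
  next
    case (Suc n)
    show ?case
    proof
      fix e assume eE: "e \<in> E"
      have t1: "Suc n \<ge> 1" by simp
      have st: "tau (Suc (Suc n)) e = max 0 (tau (Suc n) e - gamma * (c e - real (edge_flow U (ch (Suc n)) e)))"
        using tau_step[OF t1, of e] by simp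
      show "tau (Suc (Suc n)) e \<le> ?M"
      proof (cases "tau (Suc n) e > Max (lam ` U)")
        case True
        have "gamma * c e \<ge> 0" using gamma_pos cap[OF eE] by simp
        then show ?thesis using st noflow[OF t1 eE True] Suc.IH eE lam0 c0 by auto
      next
        case False
        have "gamma * (real (edge_flow U (ch (Suc n)) e)) \<le> 1 * real (card U)"
          using gamma_pos gamma_le flowU[of "Suc n" e] by (intro mult_mono) auto
        moreover have "gamma * c e \<ge> 0" using gamma_pos cap[OF eE] by simp
        ultimately show ?thesis using st False lam0 c0 by (auto simp: right_diff_distrib)
      qed
    qed
  qed
  show ?thesis
  proof (intro allI impI)
    fix t :: nat assume "t \<ge> 1"
    then obtain n where "t = Suc n" by (cases t) auto
    then show "\<forall>e\<in>E. tau t e \<le> ?M" using main by simp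
  qed
qed

end
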